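(* Let $\alpha_1,\alpha_2,\tau\ge0$. Let $\mathcal H$ be an $n$-vertex linear hypergraph in which every edge has size at least $1+\alpha_2$. Let $e\in\mathcal H$, $r:=|e|$, $m_1 := |\{f\in N(e): |f|\ge(1+\alpha_1)r\}|$ and $m_2 := |\{f\in N(e): (1+\alpha_1)r>|f|\ge r/(1+\alpha_2)\}|$. If $r>1+\alpha_2$, then (i) $(1+\alpha_1)m_1 + \frac{m_2}{1+\alpha_2} \le n + \frac{(1+\alpha_2)n}{r-1-\alpha_2}$. Moreover, if in addition $m_1+m_2\ge(1-\tau)n$ and $\alpha_1>0$, then (ii) $m_1 \le \left(\tau + \frac{(1+\alpha_2)(1+\alpha_2 r)}{r-1-\alpha_2}\right)\frac{n}{\alpha_1}$.
   Context: A hypergraph has a finite vertex set and a set of nonempty edges; linear means any two distinct edges share at most one vertex. $N(e)$ denotes the set of edges $f\ne e$ with $f\cap e\ne\varnothing$. *)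

theory Defs
  imports Complex_Main
begin

definition hypergraph :: "'a set \<Rightarrow> 'a set set \<Rightarrow> bool" where
  "hypergraph V E \<longleftrightarrow> finite V \<and> (\<forall>e\<in>E. e \<noteq> {} \<and> e \<subseteq> V)"

definition linear_hypergraph :: "'a set \<Rightarrow> 'a set set \<Rightarrow> bool" where
  "linear_hypergraph V E \<longleftrightarrow> hypergraph V E \<and>
     (\<forall>e\<in>E. \<forall>f\<in>E. e \<noteq> f \<longrightarrow> card (e \<inter> f) \<le> 1)"

definition nbhd :: "'a set set \<Rightarrow> 'a set \<Rightarrow> 'a set set" where
  "nbhd E e = {f \<in> E. f \<noteq> e \<and> f \<inter> e \<noteq> {}}"

end

theory Submission imports Defs begin

lemma nb_card:
  assumes L: "linear_hypergraph V E" and eE: "e \<in> E" and f: "f \<in> nbhd E e"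
  shows "card (f \<inter> e) = 1" "card f = card (f - e) + 1"
proof -
  have fE: "f \<in> E" "f \<noteq> e" "f \<inter> e \<noteq> {}" using f by (auto simp: nbhd_def)
  have fin: "finite f" using L fE(1) unfolding linear_hypergraph_def hypergraph_def
    by (meson finite_subset)
  have "card (f \<inter> e) \<le> 1" using L fE eE unfolding linear_hypergraph_def by blast
  moreover have "card (f \<inter> e) \<noteq> 0" using fin fE(3) by simp
  ultimately show c1: "card (f \<inter> e) = 1" by linarith
  have "card f = card (f - e) + card (f \<inter> e)"
    using fin by (metis Int_Diff_disjoint Un_Diff_Int card_Un_disjoint finite_Diff finite_Int inf_commute)
  then show "card f = card (f - e) + 1" using c1 by simp
qed

lemma through_v:
  assumes L: "linear_hypergraph V E" and eE: "e \<in> E" and F: "F \<subseteq> nbhd E e" and v: "v \<notin> e"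
  shows "card {f \<in> F. v \<in> f} \<le> card e"
proof -
  have fine: "finite e" using L eE unfolding linear_hypergraph_def hypergraph_def
    by (meson finite_subset)
  define g where "g = (\<lambda>f. SOME x. x \<in> f \<inter> e)"
  have gin: "g f \<in> f \<inter> e" if "f \<in> F" for f
  proof -
    have "f \<inter> e \<noteq> {}" using F that by (auto simp: nbhd_def)
    then show ?thesis unfolding g_def by (meson ex_in_conv someI_ex)
  qed
  have "inj_on g {f \<in> F. v \<in> f}"
  proof (rule inj_onI)
    fix f f' assume a: "f \<in> {f \<in> F. v \<in> f}" "f' \<in> {f \<in> F. v \<in> f}" "g f = g f'"
    show "f = f'"
    proof (rule ccontr)
      assume ne: "f \<noteq> f'"
      have E2: "f \<in> E" "f' \<in> E" using a F by (auto simp: nbhd_def)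
      have fin: "finite f" using L E2(1) unfolding linear_hypergraph_def hypergraph_def
        by (meson finite_subset)
      have sub: "{v, g f} \<subseteq> f \<inter> f'" using a gin[of f] gin[of f'] by auto
      have "v \<noteq> g f" using gin[of f] a v by auto
      then have "card {v, g f} = 2" by simp
      moreover have "card {v, g f} \<le> card (f \<inter> f')" using sub fin by (intro card_mono) auto
      moreover have "card (f \<inter> f') \<le> 1" using L E2 ne unfolding linear_hypergraph_def by blast
      ultimately show False by linarith
    qed
  qed
  moreover have "g ` {f \<in> F. v \<in> f} \<subseteq> e" using gin by auto
  ultimately show ?thesis using fine by (meson card_inj_on_le)
qed

lemma double_count:
  assumes L: "linear_hypergraph V E" and eE: "e \<in> E" and F: "F \<subseteq> nbhd E e"
  shows "(\<Sum>f\<in>F. card (f - e)) \<le> card e * card (V - e)"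
proof -
  have H: "hypergraph V E" using L by (simp add: linear_hypergraph_def)
  have finV: "finite V" using H by (simp add: hypergraph_def)
  have FV: "\<And>f. f \<in> F \<Longrightarrow> f \<subseteq> V" using F H by (auto simp: nbhd_def hypergraph_def)
  have finF: "finite F" using FV finV by (meson Pow_iff finite_Pow_iff rev_finite_subset subsetI)
  have "(\<Sum>f\<in>F. card (f - e)) = (\<Sum>f\<in>F. \<Sum>v\<in>V - e. if v \<in> f then 1 else 0)"
  proof (rule sum.cong[OF refl])
    fix f assume "f \<in> F"
    then have "f - e = {v \<in> V - e. v \<in> f}" using FV by auto
    then show "card (f - e) = (\<Sum>v\<in>V - e. if v \<in> f then 1 else 0)"
      using finV by (simp add: sum.If_cases Int_def)
  qed
  also have "\<dots> = (\<Sum>v\<in>V - e. \<Sum>f\<in>F. if v \<in> f then 1 else 0)" by (rule sum.swap)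
  also have "\<dots> = (\<Sum>v\<in>V - e. card {f \<in> F. v \<in> f})"
    using finF by (simp add: sum.If_cases Int_def)
  also have "\<dots> \<le> (\<Sum>v\<in>V - e. card e)"
    by (rule sum_mono) (use through_v[OF L eE F] in auto)
  also have "\<dots> = card e * card (V - e)" by simp
  finally show ?thesis .
qed


theorem proposition6p3:
  fixes V :: "'a set" and E :: "'a set set" and e :: "'a set"
    and \<alpha>1 \<alpha>2 \<tau> :: real and n r m1 m2 :: nat
  assumes "\<alpha>1 \<ge> 0" and "\<alpha>2 \<ge> 0" and "\<tau> \<ge> 0"
    and "linear_hypergraph V E" and "card V = n"
    and "\<forall>f\<in>E. real (card f) \<ge> 1 + \<alpha>2"
    and "e \<in> E" and "r = card e"
    and "m1 = card {f \<in> nbhd E e. real (card f) \<ge> (1 + \<alpha>1) * r}"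
    and "m2 = card {f \<in> nbhd E e. (1 + \<alpha>1) * r > real (card f) \<and> real (card f) \<ge> r / (1 + \<alpha>2)}"
    and "real r > 1 + \<alpha>2"
  shows "((1 + \<alpha>1) * m1 + m2 / (1 + \<alpha>2) \<le> n + (1 + \<alpha>2) * n / (real r - 1 - \<alpha>2))
    \<and> (real m1 + m2 \<ge> (1 - \<tau>) * n \<longrightarrow> \<alpha>1 > 0 \<longrightarrow>
         m1 \<le> (\<tau> + (1 + \<alpha>2) * (1 + \<alpha>2 * r) / (real r - 1 - \<alpha>2)) * n / \<alpha>1)"
proof -
  note a = assms
  define A where "A = {f \<in> nbhd E e. real (card f) \<ge> (1 + \<alpha>1) * r}"
  define B where "B = {f \<in> nbhd E e. (1 + \<alpha>1) * r > real (card f) \<and> real (card f) \<ge> r / (1 + \<alpha>2)}"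
  define D where "D = real r - 1 - \<alpha>2"
  have Dpos: "D > 0" using a(11) by (simp add: D_def)
  have L: "linear_hypergraph V E" by (rule a(4))
  have H: "hypergraph V E" using L by (simp add: linear_hypergraph_def)
  have finV: "finite V" using H by (simp add: hypergraph_def)
  have eV: "e \<subseteq> V" using H a(7) by (simp add: hypergraph_def)
  have finN: "finite (nbhd E e)"
  proof -
    have "nbhd E e \<subseteq> Pow V" using H by (auto simp: nbhd_def hypergraph_def)
    then show ?thesis using finV by (meson finite_Pow_iff rev_finite_subset)
  qed
  have finA: "finite A" and finB: "finite B" using finN by (auto simp: A_def B_def)
  have AB: "A \<inter> B = {}" by (auto simp: A_def B_def)
  have FN: "A \<union> B \<subseteq> nbhd E e" by (auto simp: A_def B_def)
  have m1: "card A = m1" and m2: "card B = m2" using a(9,10) by (simp_all add: A_def B_def)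
  have rpos: "real r > 0" using a(2,11) by linarith
  have r_le_n: "r \<le> n" using eV finV a(5,8) card_mono by blast
  have ge: "real (card f) \<ge> r / (1 + \<alpha>2)" if "f \<in> A \<union> B" for f
  proof -
    have "r / (1 + \<alpha>2) \<le> r" using a(2) rpos by (simp add: divide_le_eq)
    also have "r \<le> (1 + \<alpha>1) * r" using a(1) rpos by simp
    finally show ?thesis using that by (auto simp: A_def B_def)
  qed
  define S where "S = (\<Sum>f\<in>A \<union> B. real (card f))"
  define k where "k = real m1 + real m2"
  have cardF: "card (A \<union> B) = m1 + m2" using finA finB AB m1 m2 by (simp add: card_Un_disjoint)
  have SA: "S = (\<Sum>f\<in>A. real (card f)) + (\<Sum>f\<in>B. real (card f))"
    unfolding S_def using finA finB AB by (rule sum.union_disjoint)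
  have sa: "(\<Sum>f\<in>A. real (card f)) \<ge> m1 * ((1 + \<alpha>1) * r)"
  proof -
    have "(\<Sum>f\<in>A. real (card f)) \<ge> (\<Sum>f\<in>A. (1 + \<alpha>1) * r)"
      by (rule sum_mono) (auto simp: A_def)
    then show ?thesis using m1 by simp
  qed
  have sb: "(\<Sum>f\<in>B. real (card f)) \<ge> m2 * (r / (1 + \<alpha>2))"
  proof -
    have "(\<Sum>f\<in>B. real (card f)) \<ge> (\<Sum>f\<in>B. r / (1 + \<alpha>2))"
      by (rule sum_mono) (auto simp: B_def)
    then show ?thesis using m2 by simp
  qed
  have sk: "S \<ge> k * (r / (1 + \<alpha>2))"
  proof -
    have "S \<ge> (\<Sum>f\<in>A \<union> B. r / (1 + \<alpha>2))" unfolding S_def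
      by (rule sum_mono) (use ge in auto)
    then show ?thesis using cardF by (simp add: k_def)
  qed
  have dc: "S - k \<le> real r * (real n - r)"
  proof -
    have "(\<Sum>f\<in>A \<union> B. card (f - e)) \<le> card e * card (V - e)"
      by (rule double_count[OF L a(7) FN])
    moreover have "card (V - e) = n - r" using a(5,8) eV finV by (simp add: card_Diff_subset finite_subset)
    ultimately have 1: "real (\<Sum>f\<in>A \<union> B. card (f - e)) \<le> real r * (real n - r)"
      using r_le_n a(8) by (metis of_nat_diff of_nat_le_iff of_nat_mult)
    have "(\<Sum>f\<in>A \<union> B. real (card f)) = (\<Sum>f\<in>A \<union> B. real (card (f - e)) + 1)"
      by (rule sum.cong[OF refl]) (use nb_card(2)[OF L a(7)] FN in auto)
    then have "S = real (\<Sum>f\<in>A \<union> B. card (f - e)) + k"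
      using cardF by (simp add: S_def sum.distrib k_def)
    then show ?thesis using 1 by linarith
  qed
  have lhs: "(1 + \<alpha>1) * m1 + m2 / (1 + \<alpha>2) \<le> S / r"
  proof -
    have "((1 + \<alpha>1) * m1 + m2 / (1 + \<alpha>2)) * r = m1 * ((1 + \<alpha>1) * r) + m2 * (r / (1 + \<alpha>2))"
      by (simp add: algebra_simps)
    also have "\<dots> \<le> S" using sa sb SA by linarith
    finally show ?thesis using rpos by (simp add: le_divide_eq)
  qed
  have kb: "k * D \<le> (1 + \<alpha>2) * r * (real n - r)"
  proof -
    have "k * (r / (1 + \<alpha>2)) - k \<le> r * (real n - r)" using sk dc by linarith
    then have "(k * (r / (1 + \<alpha>2)) - k) * (1 + \<alpha>2) \<le> r * (real n - r) * (1 + \<alpha>2)"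
      using a(2) by (intro mult_right_mono) auto
    moreover have "(k * (r / (1 + \<alpha>2)) - k) * (1 + \<alpha>2) = k * D"
      using a(2) by (simp add: D_def field_simps)
    ultimately show ?thesis by (simp add: algebra_simps)
  qed
  have kb2: "k \<le> (1 + \<alpha>2) * r * (real n - r) / D" using kb Dpos by (simp add: le_divide_eq)
  have "S / r \<le> (real r * (real n - r) + k) / r" using dc rpos by (intro divide_right_mono) auto
  also have "\<dots> = (real n - r) + k / r" using rpos by (simp add: add_divide_distrib)
  also have "\<dots> \<le> (real n - r) + (1 + \<alpha>2) * (real n - r) / D"
  proof -
    have "k / r \<le> (1 + \<alpha>2) * r * (real n - r) / D / r" using kb2 rpos by (intro divide_right_mono) auto
    also have "\<dots> = (1 + \<alpha>2) * (real n - r) / D" using rpos Dpos by (simp add: field_simps)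
    finally show ?thesis by simp
  qed
  also have "\<dots> \<le> n + (1 + \<alpha>2) * n / D"
  proof -
    have "(1 + \<alpha>2) * (real n - r) \<le> (1 + \<alpha>2) * n" using a(2) rpos by simp
    then have "(1 + \<alpha>2) * (real n - r) / D \<le> (1 + \<alpha>2) * n / D" using Dpos by (simp add: divide_right_mono)
    then show ?thesis using rpos by simp
  qed
  finally have part1: "(1 + \<alpha>1) * m1 + m2 / (1 + \<alpha>2) \<le> n + (1 + \<alpha>2) * n / D" using lhs by linarith
  show ?thesis
  proof (intro conjI impI)
    show "(1 + \<alpha>1) * m1 + m2 / (1 + \<alpha>2) \<le> n + (1 + \<alpha>2) * n / (real r - 1 - \<alpha>2)"
      using part1 by (simp add: D_def)
  next
    assume cov: "real m1 + m2 \<ge> (1 - \<tau>) * n" and a1: "\<alpha>1 > 0"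
    have p2: "m2 / (1 + \<alpha>2) \<ge> ((1 - \<tau>) * n - m1) / (1 + \<alpha>2)"
      using cov a(2) by (intro divide_right_mono) auto
    have c1: "\<alpha>1 * m1 \<le> (1 + \<alpha>1 - 1 / (1 + \<alpha>2)) * m1"
    proof -
      have "1 / (1 + \<alpha>2) \<le> 1" using a(2) by simp
      then show ?thesis by (intro mult_right_mono) auto
    qed
    also have "\<dots> \<le> n + (1 + \<alpha>2) * n / D - (1 - \<tau>) * n / (1 + \<alpha>2)"
    proof -
      have "(1 + \<alpha>1 - 1 / (1 + \<alpha>2)) * m1 = (1 + \<alpha>1) * m1 + (0 - real m1) / (1 + \<alpha>2)"
        using a(2) by (simp add: field_simps)
      moreover have "((1 - \<tau>) * n - m1) / (1 + \<alpha>2) = (1 - \<tau>) * n / (1 + \<alpha>2) + (0 - real m1) / (1 + \<alpha>2)"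
        by (simp add: diff_divide_distrib)
      ultimately show ?thesis using part1 p2 by (smt (verit))
    qed
    also have "\<dots> = n * ((\<alpha>2 + \<tau>) / (1 + \<alpha>2) + (1 + \<alpha>2) / D)"
      using a(2) Dpos by (simp add: field_simps)
    also have "\<dots> \<le> n * (\<tau> + (1 + \<alpha>2) * (1 + \<alpha>2 * r) / D)"
    proof (rule mult_left_mono)
      have t: "\<tau> / (1 + \<alpha>2) \<le> \<tau>" using a(2,3) by (simp add: divide_le_eq mult_le_cancel_left1)
      have "\<alpha>2 / (1 + \<alpha>2) \<le> \<alpha>2" using a(2) by (simp add: divide_le_eq algebra_simps)
      also have "\<alpha>2 \<le> \<alpha>2 * ((1 + \<alpha>2) * r / D)"
      proof -
        have "D \<le> (1 + \<alpha>2) * r" using a(2) rpos by (simp add: D_def algebra_simps)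
        then have "1 \<le> (1 + \<alpha>2) * r / D" using Dpos by simp
        then show ?thesis using a(2) by (metis mult.right_neutral mult_left_mono)
      qed
      finally have u: "\<alpha>2 / (1 + \<alpha>2) \<le> \<alpha>2 * ((1 + \<alpha>2) * r / D)" .
      have "(1 + \<alpha>2) * (1 + \<alpha>2 * r) / D = (1 + \<alpha>2) / D + \<alpha>2 * ((1 + \<alpha>2) * r / D)"
        by (simp add: field_simps add_divide_distrib)
      moreover have "(\<alpha>2 + \<tau>) / (1 + \<alpha>2) = \<alpha>2 / (1 + \<alpha>2) + \<tau> / (1 + \<alpha>2)"
        by (simp add: add_divide_distrib)
      ultimately show "(\<alpha>2 + \<tau>) / (1 + \<alpha>2) + (1 + \<alpha>2) / D \<le> \<tau> + (1 + \<alpha>2) * (1 + \<alpha>2 * r) / D"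
        using t u by linarith
    qed simp
    finally have "\<alpha>1 * m1 \<le> n * (\<tau> + (1 + \<alpha>2) * (1 + \<alpha>2 * r) / D)" .
    then show "m1 \<le> (\<tau> + (1 + \<alpha>2) * (1 + \<alpha>2 * r) / (real r - 1 - \<alpha>2)) * n / \<alpha>1"
      using a1 by (simp add: le_divide_eq D_def mult.commute)
  qed
qed

end
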